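(* For every integer $k\ge 5$, $m_2^{(k-3)}(k-1,k-2)=k+1$.
   Context: For a prime power $q$ and $N\ge1$, a multiset of points in $\mathrm{PG}(N,q)$ is a map $\mathcal{K}$ from the points to $\mathbb{Z}_{\ge0}$, with $\mathcal{K}(S)=\sum_{P\in S}\mathcal{K}(P)$; its cardinality is $\mathcal{K}(\mathrm{PG}(N,q))$. Dimensions are projective (so $(N-2)$-dimensional subspaces of $\mathrm{PG}(N,q)$ are those of codimension two). For $0\le r\le N-1$ and a positive integer $w$, $m_q^{(r)}(N,w)$ is the maximum cardinality of a multiset of points in $\mathrm{PG}(N,q)$ such that every $r$-dimensional subspace has multiplicity at most $w$. *)

theory Defs
  imports Main
begin

text \<open>The underlying vector space F^(N+1) of PG(N,F), vectors as functions nat => F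
  supported on {0..N}.\<close>
definition vecs :: "nat \<Rightarrow> (nat \<Rightarrow> 'a::field) set" where
  "vecs N = {v. \<forall>i>N. v i = 0}"

definition lin_span :: "(nat \<Rightarrow> 'a::field) set \<Rightarrow> (nat \<Rightarrow> 'a) set" where
  "lin_span B = {v. \<exists>c. v = (\<lambda>i. \<Sum>b\<in>B. c b * b i)}"

definition lin_indep :: "(nat \<Rightarrow> 'a::field) set \<Rightarrow> bool" where
  "lin_indep B \<longleftrightarrow> (\<forall>c. (\<forall>i. (\<Sum>b\<in>B. c b * b i) = 0) \<longrightarrow> (\<forall>b\<in>B. c b = 0))"

definition proj_points :: "nat \<Rightarrow> (nat \<Rightarrow> 'a::field) set set" where
  "proj_points N = {lin_span {v} | v. v \<in> vecs N \<and> v \<noteq> (\<lambda>_. 0)}"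

text \<open>Projective r-dimensional subspaces of PG(N,F): linear subspaces of F^(N+1)
  of (vector) dimension r+1.\<close>
definition proj_subspaces :: "nat \<Rightarrow> nat \<Rightarrow> (nat \<Rightarrow> 'a::field) set set" where
  "proj_subspaces N r =
     {lin_span B | B. finite B \<and> B \<subseteq> vecs N \<and> lin_indep B \<and> card B = r + 1}"

definition mult_of :: "nat \<Rightarrow> ((nat \<Rightarrow> 'a::field) set \<Rightarrow> nat) \<Rightarrow> (nat \<Rightarrow> 'a) set \<Rightarrow> nat" where
  "mult_of N K S = (\<Sum>P\<in>{P\<in>proj_points N. P \<subseteq> S}. K P)"

text \<open>m_q^(r)(N,w) over the finite field 'a (q = CARD('a)).\<close>
definition m_q :: "'a::{field,finite} itself \<Rightarrow> nat \<Rightarrow> nat \<Rightarrow> nat \<Rightarrow> nat" where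
  "m_q _ r N w = (GREATEST n. \<exists>K :: (nat \<Rightarrow> 'a) set \<Rightarrow> nat.
      (\<forall>S\<in>proj_subspaces N r. mult_of N K S \<le> w) \<and>
      n = (\<Sum>P\<in>proj_points N. K P))"

end

theory Submission imports Defs HOL.Vector_Spaces "HOL-Library.Function_Algebras" "HOL-Library.FuncSet" begin

definition sc :: "'a::field \<Rightarrow> (nat \<Rightarrow> 'a) \<Rightarrow> (nat \<Rightarrow> 'a)" where
  "sc c v = (\<lambda>i. c * v i)"

global_interpretation V: vector_space "sc :: 'a::field \<Rightarrow> _"
  by unfold_locales (auto simp: sc_def fun_eq_iff algebra_simps)

lemma sum_fun_apply: "(\<Sum>b\<in>B. (f b :: nat \<Rightarrow> 'a::comm_monoid_add)) i = (\<Sum>b\<in>B. f b i)"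
  by (induction B rule: infinite_finite_induct) (auto simp: zero_fun_def)

lemma sum_sc: "(\<Sum>b\<in>B. sc (c b) b) = (\<lambda>i. \<Sum>b\<in>B. c b * b i)"
  by (rule ext) (simp add: sum_fun_apply sc_def)

lemma lin_span_eq: "finite B \<Longrightarrow> lin_span B = V.span B"
  by (auto simp: lin_span_def V.span_finite sum_sc)

lemma lin_indep_eq: "finite B \<Longrightarrow> lin_indep B \<longleftrightarrow> V.independent B"
  by (auto simp: lin_indep_def V.dependent_finite sum_sc fun_eq_iff)

lemma F2_univ:
  assumes "card (UNIV :: 'a::{field,finite} set) = 2"
  shows "(UNIV :: 'a set) = {0, 1}"
proof -
  have "{0,1} \<subseteq> (UNIV :: 'a set)" by auto
  moreover have "card {0::'a,1} = 2" by simp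
  ultimately show ?thesis using assms
    by (metis card_subset_eq finite_UNIV)
qed

lemma F2_cases:
  assumes "card (UNIV :: 'a::{field,finite} set) = 2"
  shows "(x::'a) = 0 \<or> x = 1"
  using F2_univ[OF assms] by blast

lemma F2_two:
  assumes "card (UNIV :: 'a::{field,finite} set) = 2"
  shows "(2::'a) = 0"
proof (rule ccontr)
  assume "(2::'a) \<noteq> 0"
  then have "(2::'a) = 1" using F2_cases[OF assms, of 2] by auto
  then show False by (metis add_cancel_left_right one_add_one one_neq_zero)
qed

lemma F2_double:
  assumes "card (UNIV :: 'a::{field,finite} set) = 2"
  shows "(x::'a) + x = 0"
  by (metis F2_two[OF assms] mult_2 mult_zero_left)

lemma F2_double_fun:
  assumes "card (UNIV :: 'a::{field,finite} set) = 2"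
  shows "(v::nat \<Rightarrow> 'a) + v = 0"
  unfolding plus_fun_def zero_fun_def using F2_double[OF assms] by metis

lemma lin_span_single:
  assumes "card (UNIV :: 'a::{field,finite} set) = 2"
  shows "lin_span {v::nat \<Rightarrow> 'a} = {0, v}"
proof -
  have "lin_span {v} = {w. \<exists>c. w = (\<lambda>i. c * v i)}"
    unfolding lin_span_def
  proof safe
    fix c :: "(nat \<Rightarrow> 'a) \<Rightarrow> 'a"
    show "\<exists>d. (\<lambda>i. \<Sum>b\<in>{v}. c b * b i) = (\<lambda>i. d * v i)" by (rule exI[of _ "c v"]) simp
  next
    fix d :: 'a
    show "\<exists>c. (\<lambda>i. d * v i) = (\<lambda>i. \<Sum>b\<in>{v}. c b * b i)" by (rule exI[of _ "\<lambda>_. d"]) simp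
  qed
  also have "\<dots> = {0, v}"
  proof
    show "{w. \<exists>c. w = (\<lambda>i. c * v i)} \<subseteq> {0, v}"
    proof
      fix w assume "w \<in> {w. \<exists>c. w = (\<lambda>i. c * v i)}"
      then obtain c where "w = (\<lambda>i. c * v i)" by blast
      then show "w \<in> {0, v}" using F2_cases[OF assms, of c] by (auto simp: zero_fun_def)
    qed
  next
    have "0 = (\<lambda>i. 0 * v i)" by (simp add: zero_fun_def)
    moreover have "v = (\<lambda>i. 1 * v i)" by simp
    ultimately show "{0, v} \<subseteq> {w. \<exists>c. w = (\<lambda>i. c * v i)}" by blast
  qed
  finally show ?thesis .
qed


lemma vecs_finite_card:
  shows "finite (vecs N :: (nat \<Rightarrow> 'a::{field,finite}) set) \<and>
         card (vecs N :: (nat \<Rightarrow> 'a) set) \<le> card (UNIV :: 'a set) ^ Suc N"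
proof -
  let ?r = "\<lambda>v::nat \<Rightarrow> 'a. restrict v {..N}"
  have inj: "inj_on ?r (vecs N)"
  proof (rule inj_onI)
    fix v w assume v: "v \<in> vecs N" and w: "w \<in> vecs N" and eq: "?r v = ?r w"
    show "v = w"
    proof
      fix i show "v i = w i"
      proof (cases "i \<le> N")
        case True then show ?thesis using fun_cong[OF eq, of i] by simp
      next
        case False then show ?thesis using v w by (simp add: vecs_def)
      qed
    qed
  qed
  have sub: "?r ` vecs N \<subseteq> (\<Pi>\<^sub>E i\<in>{..N}. (UNIV :: 'a set))" by (auto simp: PiE_iff split: if_splits)
  have fin: "finite (\<Pi>\<^sub>E i\<in>{..N}. (UNIV :: 'a set))" by (simp add: finite_PiE)
  have cPi: "card (\<Pi>\<^sub>E i\<in>{..N}. (UNIV :: 'a set)) = card (UNIV :: 'a set) ^ Suc N"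
    by (simp add: card_PiE)
  have "finite (?r ` vecs N)" using finite_subset[OF sub fin] .
  then have f: "finite (vecs N :: (nat \<Rightarrow> 'a) set)" using inj finite_image_iff by blast
  have "card (vecs N :: (nat \<Rightarrow> 'a) set) = card (?r ` vecs N)" using inj card_image by fastforce
  also have "\<dots> \<le> card (UNIV :: 'a set) ^ Suc N" using card_mono[OF fin sub] cPi by simp
  finally show ?thesis using f by simp
qed

lemma vecs_sum: "(\<And>v. v \<in> Y \<Longrightarrow> v \<in> vecs N) \<Longrightarrow> (\<Sum>v\<in>Y. v) \<in> vecs N"
  by (auto simp: vecs_def sum_fun_apply intro!: sum.neutral)

lemma zero_in_vecs: "0 \<in> vecs N" by (simp add: vecs_def)

definition W :: "nat \<Rightarrow> (nat \<Rightarrow> 'a::field) set" where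
  "W N = vecs N - {0}"

lemma proj_points_eq:
  assumes two: "card (UNIV :: 'a::{field,finite} set) = 2"
  shows "(proj_points N :: (nat \<Rightarrow> 'a) set set) = (\<lambda>v. {0, v}) ` W N"
  unfolding proj_points_def W_def lin_span_single[OF two]
  by (auto simp: zero_fun_def)

lemma inj_pt: "inj_on (\<lambda>v. {0::nat\<Rightarrow>'a::field, v}) (W N)"
  by (rule inj_onI) (auto simp: W_def doubleton_eq_iff)

lemma total_eq:
  assumes two: "card (UNIV :: 'a::{field,finite} set) = 2"
  shows "(\<Sum>P\<in>(proj_points N :: (nat \<Rightarrow> 'a) set set). K P) = (\<Sum>v\<in>W N. K {0, v})"
  unfolding proj_points_eq[OF two] by (simp add: sum.reindex[OF inj_pt])

lemma mult_eq:
  assumes two: "card (UNIV :: 'a::{field,finite} set) = 2" and z: "(0::nat\<Rightarrow>'a) \<in> S"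
  shows "mult_of N K S = (\<Sum>v\<in>{v\<in>W N. v \<in> S}. K {0, v})"
proof -
  have "{P \<in> (proj_points N :: (nat \<Rightarrow> 'a) set set). P \<subseteq> S} = (\<lambda>v. {0, v}) ` {v\<in>W N. v \<in> S}"
    unfolding proj_points_eq[OF two] using z by auto
  moreover have "inj_on (\<lambda>v. {0::nat\<Rightarrow>'a, v}) {v\<in>W N. v \<in> S}"
    using inj_pt by (rule inj_on_subset) auto
  ultimately show ?thesis unfolding mult_of_def by (simp add: sum.reindex)
qed

lemma W_finite: "finite (W N :: (nat \<Rightarrow> 'a::{field,finite}) set)"
  using vecs_finite_card[where N=N and 'a='a] unfolding W_def by blast


definition ee :: "nat \<Rightarrow> nat \<Rightarrow> 'a::field" where
  "ee i = (\<lambda>j. if j = i then 1 else 0)"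

definition ff :: "nat \<Rightarrow> nat \<Rightarrow> 'a::field" where
  "ff N = (\<lambda>j. if j \<le> N then 1 else 0)"

definition FR :: "nat \<Rightarrow> (nat \<Rightarrow> 'a::field) set" where
  "FR N = ee ` {..N} \<union> {ff N}"

lemma ee_inj: "inj (ee :: nat \<Rightarrow> nat \<Rightarrow> 'a::field)"
proof (rule injI)
  fix i l assume "(ee i :: nat \<Rightarrow> 'a) = ee l"
  then have "(ee i :: nat \<Rightarrow> 'a) i = ee l i" by simp
  then show "i = l" by (auto simp: ee_def split: if_splits)
qed

lemma ee_ne_ff: "1 \<le> N \<Longrightarrow> (ee i :: nat \<Rightarrow> 'a::field) \<noteq> ff N"
proof
  assume N: "1 \<le> N" and eq: "(ee i :: nat \<Rightarrow> 'a) = ff N"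
  define j where "j = (if i = 0 then 1 else (0::nat))"
  have "(ee i :: nat \<Rightarrow> 'a) j = ff N j" using eq by simp
  then show False using N by (auto simp: ee_def ff_def j_def split: if_splits)
qed

lemma FR_finite: "finite (FR N)" by (simp add: FR_def)

lemma card_ee: "card ((ee :: nat \<Rightarrow> nat \<Rightarrow> 'a::field) ` {..N}) = Suc N"
  using card_image[OF inj_on_subset[OF ee_inj, of "{..N}"]] by simp

lemma card_FR: "1 \<le> N \<Longrightarrow> card (FR N :: (nat \<Rightarrow> 'a::field) set) = N + 2"
proof -
  assume N: "1 \<le> N"
  have "ff N \<notin> (ee :: nat \<Rightarrow> nat \<Rightarrow> 'a) ` {..N}" using ee_ne_ff[OF N] by (metis imageE)
  then show ?thesis unfolding FR_def using card_ee[where 'a='a, of N] by simp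
qed

lemma FR_W: "(FR N :: (nat \<Rightarrow> 'a::field) set) \<subseteq> W N"
proof
  fix v :: "nat \<Rightarrow> 'a" assume "v \<in> FR N"
  then consider i where "i \<le> N" "v = ee i" | "v = ff N" unfolding FR_def by auto
  then show "v \<in> W N"
  proof cases
    case 1
    then have "v i = 1" by (simp add: ee_def)
    then have "v \<noteq> 0" by (auto simp: zero_fun_def dest: fun_cong[of _ _ i])
    then show ?thesis using 1 by (auto simp: W_def vecs_def ee_def)
  next
    case 2
    then have "v 0 = 1" by (simp add: ff_def)
    then have "v \<noteq> 0" by (auto simp: zero_fun_def dest: fun_cong[of _ _ 0])
    then show ?thesis using 2 by (auto simp: W_def vecs_def ff_def)
  qed
qed

lemma coord:
  assumes N: "1 \<le> N" and G: "G \<subseteq> (FR N :: (nat \<Rightarrow> 'a::field) set)" and i: "i \<le> N"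
  shows "(\<Sum>w\<in>G. u w * w i) = (if ee i \<in> G then u (ee i) else 0) + (if ff N \<in> G then u (ff N) else 0)"
proof -
  have fin: "finite G" using G FR_finite finite_subset by blast
  have "\<And>w. w \<in> G \<Longrightarrow> u w * w i = (if w = ee i then u w else 0) + (if w = ff N then u w else 0)"
  proof -
    fix w assume w: "w \<in> G"
    then consider l where "l \<le> N" "w = ee l" | "w = ff N" using G unfolding FR_def by auto
    then show "u w * w i = (if w = ee i then u w else 0) + (if w = ff N then u w else 0)"
    proof cases
      case 1
      then show ?thesis using ee_ne_ff[OF N, of l] inj_eq[OF ee_inj, of l i]
        by (auto simp: ee_def)
    next
      case 2
      have "w \<noteq> ee i" using ee_ne_ff[OF N, of i] 2 by metis
      moreover have "w i = 1" using 2 i by (simp add: ff_def)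
      ultimately show ?thesis using 2 by simp
    qed
  qed
  then have "(\<Sum>w\<in>G. u w * w i) = (\<Sum>w\<in>G. (if w = ee i then u w else 0) + (if w = ff N then u w else 0))"
    by (rule sum.cong[OF refl])
  also have "\<dots> = (if ee i \<in> G then u (ee i) else 0) + (if ff N \<in> G then u (ff N) else 0)"
    using fin by (simp add: sum.distrib sum.delta')
  finally show ?thesis .
qed

lemma FR_indep:
  assumes N: "1 \<le> N" and G: "G \<subseteq> (FR N :: (nat \<Rightarrow> 'a::field) set)"
    and c: "ff N \<notin> G \<or> card G \<le> N"
  shows "V.independent G"
proof -
  have fin: "finite G" using G FR_finite finite_subset by blast
  have "\<forall>u. (\<Sum>v\<in>G. sc (u v) v) = 0 \<longrightarrow> (\<forall>v\<in>G. u v = 0)"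
  proof (intro allI impI ballI)
    fix u v assume sum0: "(\<Sum>v\<in>G. sc (u v) v) = 0" and v: "v \<in> G"
    have s0: "\<And>i. (\<Sum>w\<in>G. u w * w i) = 0"
      using sum0 by (simp add: sum_sc fun_eq_iff zero_fun_def)
    have uf: "ff N \<in> G \<Longrightarrow> u (ff N) = 0"
    proof -
      assume fG: "ff N \<in> G"
      have "\<exists>j\<le>N. ee j \<notin> G"
      proof (rule ccontr)
        assume "\<not> (\<exists>j\<le>N. ee j \<notin> G)"
        then have "FR N \<subseteq> G" using fG unfolding FR_def by auto
        then have "card (FR N :: (nat \<Rightarrow> 'a) set) \<le> card G" using fin card_mono by blast
        then show False using card_FR[OF N, where 'a='a] c fG by simp
      qed
      then obtain j where j: "j \<le> N" "ee j \<notin> G" by blast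
      show "u (ff N) = 0" using s0[of j] coord[OF N G j(1), of u] j(2) fG by simp
    qed
    consider i where "i \<le> N" "v = ee i" | "v = ff N" using v G unfolding FR_def by auto
    then show "u v = 0"
    proof cases
      case 1
      then show ?thesis using s0[of i] coord[OF N G 1(1), of u] v uf
        by (cases "ff N \<in> G") auto
    next
      case 2 then show ?thesis using uf v by simp
    qed
  qed
  then show ?thesis using V.dependent_finite[OF fin] by blast
qed

lemma EXT:
  assumes N: "1 \<le> N"
  shows "finite B \<Longrightarrow> B \<subseteq> vecs N \<Longrightarrow> V.independent B \<Longrightarrow> card B + d \<le> N + 1 \<Longrightarrow>
    \<exists>B'. B \<subseteq> B' \<and> B' \<subseteq> vecs N \<and> V.independent (B' :: (nat \<Rightarrow> 'a::field) set) \<and> finite B' \<and> card B' = card B + d"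
proof (induction d arbitrary: B)
  case 0 show ?case by (rule exI[of _ B]) (simp add: 0)
next
  case (Suc d)
  let ?E = "(ee :: nat \<Rightarrow> nat \<Rightarrow> 'a) ` {..N}"
  have Eind: "V.independent ?E"
  proof (rule FR_indep[OF N])
    show "?E \<subseteq> FR N" unfolding FR_def by blast
    have "ff N \<notin> ?E" using ee_ne_ff[OF N] by (metis imageE)
    then show "ff N \<notin> ?E \<or> card ?E \<le> N" by (rule disjI1)
  qed
  have "\<not> ?E \<subseteq> V.span B"
  proof
    assume "?E \<subseteq> V.span B"
    then have "card ?E \<le> card B" using V.independent_span_bound[OF Suc.prems(1) Eind] by (simp only:)
    then show False using card_ee[where 'a='a, of N] Suc.prems(4) by simp
  qed
  then obtain x where x: "x \<in> ?E" "x \<notin> V.span B" by blast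
  have xB: "x \<notin> B" using x(2) V.span_superset by blast
  have ind: "V.independent (insert x B)" using V.independent_insertI[OF x(2) Suc.prems(3)] .
  have xv: "x \<in> vecs N" using x(1) by (auto simp: vecs_def ee_def)
  have "\<exists>B'. insert x B \<subseteq> B' \<and> B' \<subseteq> vecs N \<and> V.independent (B' :: (nat \<Rightarrow> 'a) set) \<and> finite B' \<and> card B' = card (insert x B) + d"
  proof (rule Suc.IH)
    show "finite (insert x B)" using Suc.prems(1) by simp
    show "insert x B \<subseteq> vecs N" using Suc.prems(2) xv by simp
    show "V.independent (insert x B)" by (rule ind)
    show "card (insert x B) + d \<le> N + 1" using Suc.prems(1,4) xB by simp
  qed
  then obtain B' where B': "insert x B \<subseteq> B' \<and> B' \<subseteq> vecs N \<and> V.independent (B' :: (nat \<Rightarrow> 'a) set) \<and> finite B' \<and> card B' = card (insert x B) + d"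
    by (rule exE)
  have "card (insert x B) + d = card B + Suc d" using xB Suc.prems(1) by simp
  then show ?case using B' by (intro exI[of _ B']) auto
qed


lemma sd_sum:
  assumes two: "card (UNIV :: 'a::{field,finite} set) = 2" and fA: "finite A" and fB: "finite B"
  shows "(\<Sum>v\<in>(A-B)\<union>(B-A). (v::nat\<Rightarrow>'a)) = (\<Sum>v\<in>A. v) + (\<Sum>v\<in>B. v)"
proof -
  have 1: "(\<Sum>v\<in>A. v) = (\<Sum>v\<in>A\<inter>B. v) + (\<Sum>v\<in>A-B. (v::nat\<Rightarrow>'a))"
    using fA by (rule sum.Int_Diff)
  have 2: "(\<Sum>v\<in>B. v) = (\<Sum>v\<in>B\<inter>A. v) + (\<Sum>v\<in>B-A. (v::nat\<Rightarrow>'a))"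
    using fB by (rule sum.Int_Diff)
  have 3: "(\<Sum>v\<in>(A-B)\<union>(B-A). (v::nat\<Rightarrow>'a)) = (\<Sum>v\<in>A-B. v) + (\<Sum>v\<in>B-A. v)"
    using fA fB by (intro sum.union_disjoint) auto
  have 4: "(\<Sum>v\<in>A\<inter>B. (v::nat\<Rightarrow>'a)) + (\<Sum>v\<in>A\<inter>B. v) = 0" by (rule F2_double_fun[OF two])
  have "(\<Sum>v\<in>A. v) + (\<Sum>v\<in>B. v) =
        (\<Sum>v\<in>A-B. (v::nat\<Rightarrow>'a)) + (\<Sum>v\<in>B-A. v) + ((\<Sum>v\<in>A\<inter>B. v) + (\<Sum>v\<in>A\<inter>B. v))"
    unfolding 1 2 by (simp add: Int_commute algebra_simps)
  then show ?thesis using 3 4 by simp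
qed

lemma card_sd:
  assumes fA: "finite A" and fB: "finite B"
  shows "card ((A-B)\<union>(B-A)) + card (A \<inter> B) = card (A \<union> B)"
proof -
  have "A \<union> B = ((A-B)\<union>(B-A)) \<union> (A \<inter> B)" by blast
  moreover have "((A-B)\<union>(B-A)) \<inter> (A \<inter> B) = {}" by blast
  ultimately show ?thesis using fA fB by (metis card_Un_disjoint finite_Int finite_Un finite_Diff)
qed

lemma three_fiber:
  assumes "2 < card S"
  shows "\<exists>a b c. a \<in> S \<and> b \<in> S \<and> c \<in> S \<and> a \<noteq> b \<and> a \<noteq> c \<and> b \<noteq> c"
proof -
  obtain S' where "S' \<subseteq> S" "card S' = 3" using obtain_subset_with_card_n[of 3 S] assms by auto
  then show ?thesis unfolding card_3_iff by blast
qed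

lemma PH:
  assumes two: "card (UNIV :: 'a::{field,finite} set) = 2" and N4: "4 \<le> N"
    and T: "T \<subseteq> (vecs N :: (nat \<Rightarrow> 'a) set)" and fin: "finite T" and c: "N + 3 \<le> card T"
  shows "\<exists>D\<subseteq>T. D \<noteq> {} \<and> card D \<le> N \<and> (\<Sum>v\<in>D. v) = 0"
proof -
  obtain T0 where T0: "T0 \<subseteq> T" "card T0 = N + 3" "finite T0"
    using obtain_subset_with_card_n[OF c] by blast
  define \<sigma> :: "(nat \<Rightarrow> 'a) set \<Rightarrow> (nat \<Rightarrow> 'a)" where "\<sigma> Y = (\<Sum>v\<in>Y. v)" for Y
  have "\<exists>Y1 Y2 Y3. Y1 \<subseteq> T0 \<and> Y2 \<subseteq> T0 \<and> Y3 \<subseteq> T0 \<and> Y1 \<noteq> Y2 \<and> Y1 \<noteq> Y3 \<and> Y2 \<noteq> Y3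
      \<and> \<sigma> Y2 = \<sigma> Y1 \<and> \<sigma> Y3 = \<sigma> Y1"
  proof (rule ccontr)
    assume H: "\<not> ?thesis"
    define fib where "fib x = {Y\<in>Pow T0. \<sigma> Y = x}" for x
    have fb: "card (fib x) \<le> 2" for x
    proof (rule ccontr)
      assume "\<not> card (fib x) \<le> 2"
      then obtain a b c where "a \<in> fib x" "b \<in> fib x" "c \<in> fib x" "a \<noteq> b" "a \<noteq> c" "b \<noteq> c"
        using three_fiber[of "fib x"] by auto
      then show False using H unfolding fib_def by auto
    qed
    have sub: "Pow T0 \<subseteq> (\<Union>x\<in>vecs N. fib x)"
    proof
      fix Y assume Y: "Y \<in> Pow T0"
      then have "\<sigma> Y \<in> vecs N" unfolding \<sigma>_def using T0(1) T by (intro vecs_sum) auto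
      then show "Y \<in> (\<Union>x\<in>vecs N. fib x)" using Y unfolding fib_def by auto
    qed
    have fv: "finite (vecs N :: (nat \<Rightarrow> 'a) set)" and cv: "card (vecs N :: (nat \<Rightarrow> 'a) set) \<le> 2 ^ Suc N"
      using vecs_finite_card[where 'a='a and N=N] two by auto
    have fU: "finite (\<Union>x\<in>vecs N. fib x)" using fv T0(3) unfolding fib_def by auto
    have "(2::nat) ^ (N + 3) = card (Pow T0)" using T0 by (simp add: card_Pow)
    also have "\<dots> \<le> card (\<Union>x\<in>vecs N. fib x)" using card_mono[OF fU sub] .
    also have "\<dots> \<le> (\<Sum>x\<in>vecs N. card (fib x))" by (rule card_UN_le[OF fv])
    also have "\<dots> \<le> (\<Sum>x\<in>(vecs N :: (nat \<Rightarrow> 'a) set). 2)" by (rule sum_mono) (rule fb)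
    also have "\<dots> = 2 * card (vecs N :: (nat \<Rightarrow> 'a) set)" by simp
    also have "\<dots> \<le> 2 * 2 ^ Suc N" using cv by simp
    finally have "(2::nat) ^ (N + 3) \<le> 2 * 2 ^ Suc N" .
    then show False by (simp add: power_add)
  qed
  then obtain Y1 Y2 Y3 where Y: "Y1 \<subseteq> T0" "Y2 \<subseteq> T0" "Y3 \<subseteq> T0" "Y1 \<noteq> Y2" "Y1 \<noteq> Y3" "Y2 \<noteq> Y3"
      "\<sigma> Y2 = \<sigma> Y1" "\<sigma> Y3 = \<sigma> Y1" by blast
  have fY: "finite Y1" "finite Y2" "finite Y3"
    using finite_subset[OF Y(1) T0(3)] finite_subset[OF Y(2) T0(3)] finite_subset[OF Y(3) T0(3)] by auto
  define D12 where "D12 = (Y1-Y2)\<union>(Y2-Y1)"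
  define D13 where "D13 = (Y1-Y3)\<union>(Y3-Y1)"
  have f12: "finite D12" and f13: "finite D13" using fY by (auto simp: D12_def D13_def)
  have s12: "\<sigma> D12 = 0" unfolding D12_def \<sigma>_def sd_sum[OF two fY(1,2)]
    using Y(7) F2_double_fun[OF two] unfolding \<sigma>_def by simp
  have s13: "\<sigma> D13 = 0" unfolding D13_def \<sigma>_def sd_sum[OF two fY(1,3)]
    using Y(8) F2_double_fun[OF two] unfolding \<sigma>_def by simp
  have n12: "D12 \<noteq> {}" using Y(4) unfolding D12_def by blast
  have n13: "D13 \<noteq> {}" using Y(5) unfolding D13_def by blast
  have t12: "D12 \<subseteq> T" and t13: "D13 \<subseteq> T" using Y T0(1) unfolding D12_def D13_def by auto
  show ?thesis
  proof (cases "card D12 \<le> N")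
    case True then show ?thesis using t12 n12 s12 unfolding \<sigma>_def by blast
  next
    case False
    show ?thesis
    proof (cases "card D13 \<le> N")
      case True then show ?thesis using t13 n13 s13 unfolding \<sigma>_def by blast
    next
      case False2: False
      define D where "D = (D12-D13)\<union>(D13-D12)"
      have sD: "\<sigma> D = 0" unfolding D_def \<sigma>_def sd_sum[OF two f12 f13]
        using s12 s13 unfolding \<sigma>_def by simp
      have "D12 \<noteq> D13"
      proof
        assume "D12 = D13"
        then have "Y2 = Y3" unfolding D12_def D13_def by (auto simp: set_eq_iff)
        then show False using Y(6) by simp
      qed
      then have nD: "D \<noteq> {}" unfolding D_def by blast
      have tD: "D \<subseteq> T" using t12 t13 unfolding D_def by auto
      have u: "card (D12 \<union> D13) \<le> N + 3"
        using card_mono[OF T0(3), of "D12 \<union> D13"] Y(1,2,3) T0(2) unfolding D12_def D13_def by auto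
      have e1: "card D + card (D12 \<inter> D13) = card (D12 \<union> D13)"
        unfolding D_def by (rule card_sd[OF f12 f13])
      have e2: "card (D12 \<union> D13) + card (D12 \<inter> D13) = card D12 + card D13"
        by (rule card_Un_Int[OF f12 f13, symmetric])
      have "card D \<le> N" using e1 e2 u False False2 N4 by linarith
      then show ?thesis using tD nD sD unfolding \<sigma>_def by blast
    qed
  qed
qed


lemma SUB:
  assumes two: "card (UNIV :: 'a::{field,finite} set) = 2" and N2: "2 \<le> N"
    and fB: "finite B" and Bv: "B \<subseteq> (vecs N :: (nat \<Rightarrow> 'a) set)" and iB: "V.independent B"
    and cB: "card B \<le> N - 1"
    and hK: "\<forall>S\<in>(proj_subspaces N (N - 2) :: (nat \<Rightarrow> 'a) set set). mult_of N K S \<le> N - 1"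
  shows "(\<Sum>v\<in>{v\<in>W N. v \<in> V.span B}. K {0, v}) \<le> N - 1"
proof -
  have "card B + (N - 1 - card B) \<le> N + 1" using cB by simp
  from EXT[OF _ fB Bv iB this] N2 obtain B' where B': "B \<subseteq> B'" "B' \<subseteq> vecs N" "V.independent (B' :: (nat \<Rightarrow> 'a) set)"
    "finite B'" "card B' = card B + (N - 1 - card B)" by auto
  have cB': "card B' = N - 2 + 1" using B'(5) cB N2 by simp
  have S: "V.span B' \<in> (proj_subspaces N (N - 2) :: (nat \<Rightarrow> 'a) set set)"
    unfolding proj_subspaces_def using B' cB' lin_span_eq[OF B'(4)] lin_indep_eq[OF B'(4)] by blast
  have "(\<Sum>v\<in>{v\<in>W N. v \<in> V.span B}. K {0, v}) \<le> (\<Sum>v\<in>{v\<in>W N. v \<in> V.span B'}. K {0, v})"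
    using V.span_mono[OF B'(1)] W_finite[where 'a='a and N=N] by (intro sum_mono2) auto
  also have "\<dots> = mult_of N K (V.span B')" using mult_eq[OF two V.span_zero] by simp
  also have "\<dots> \<le> N - 1" using hK S by blast
  finally show ?thesis .
qed

lemma dep_of_zero_sum:
  assumes "finite D" "D \<noteq> {}" "(\<Sum>v\<in>D. v) = (0::nat \<Rightarrow> 'a::field)"
  shows "V.dependent D"
proof -
  obtain d where "d \<in> D" using assms(2) by blast
  moreover have "(\<Sum>v\<in>D. sc 1 v) = (0::nat \<Rightarrow> 'a)" using assms(3) by simp
  ultimately show ?thesis unfolding V.dependent_explicit using assms(1)
    by (intro exI[of _ D] exI[of _ "\<lambda>_. 1"]) auto
qed

lemma upper:
  assumes two: "card (UNIV :: 'a::{field,finite} set) = 2" and N4: "4 \<le> N"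
    and hK: "\<forall>S\<in>(proj_subspaces N (N - 2) :: (nat \<Rightarrow> 'a) set set). mult_of N K S \<le> N - 1"
  shows "(\<Sum>P\<in>(proj_points N :: (nat \<Rightarrow> 'a) set set). K P) \<le> N + 2"
proof (rule ccontr)
  assume neg: "\<not> ?thesis"
  define K' where "K' v = K {0, v}" for v :: "nat \<Rightarrow> 'a"
  define T where "T = {v\<in>(W N :: (nat \<Rightarrow> 'a) set). 0 < K' v}"
  have fW: "finite (W N :: (nat \<Rightarrow> 'a) set)" by (rule W_finite)
  have fT: "finite T" using fW unfolding T_def by simp
  have TW: "T \<subseteq> W N" unfolding T_def by auto
  have Tv: "T \<subseteq> vecs N" using TW unfolding W_def by auto
  have "(\<Sum>P\<in>(proj_points N :: (nat \<Rightarrow> 'a) set set). K P) = (\<Sum>v\<in>W N. K' v)"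
    unfolding total_eq[OF two] K'_def ..
  also have "\<dots> = (\<Sum>v\<in>T. K' v)" using fW TW by (intro sum.mono_neutral_right) (auto simp: T_def)
  finally have tot: "N + 3 \<le> (\<Sum>v\<in>T. K' v)" using neg by simp
  have pos: "\<And>v. v \<in> T \<Longrightarrow> 1 \<le> K' v" unfolding T_def by auto
  have sum_ge_card: "\<And>X. X \<subseteq> T \<Longrightarrow> card X \<le> (\<Sum>v\<in>X. K' v)"
  proof -
    fix X assume X: "X \<subseteq> T"
    have "card X = (\<Sum>v\<in>X. 1)" by simp
    also have "\<dots> \<le> (\<Sum>v\<in>X. K' v)" using X pos by (intro sum_mono) auto
    finally show "card X \<le> (\<Sum>v\<in>X. K' v)" .
  qed
  have "\<exists>X. X \<subseteq> T \<and> ((card X \<le> N - 1 \<and> N \<le> (\<Sum>v\<in>X. K' v)) \<or> (card X = N \<and> V.dependent X))"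
  proof (cases "card T \<le> N - 1")
    case True then show ?thesis using tot by (intro exI[of _ T]) auto
  next
    case cT: False
    show ?thesis
    proof (cases "\<exists>v\<in>T. 2 \<le> K' v")
      case True
      then obtain v where v: "v \<in> T" "2 \<le> K' v" by blast
      have "\<exists>X. {v} \<subseteq> X \<and> X \<subseteq> T \<and> card X = N - 1"
        by (rule exists_subset_between[of "{v}" "N - 1" T]) (use cT fT v N4 in auto)
      then obtain X where X: "{v} \<subseteq> X" "X \<subseteq> T" "card X = N - 1" by blast
      have fX: "finite X" using X(2) fT finite_subset by blast
      have "(\<Sum>w\<in>X. K' w) = K' v + (\<Sum>w\<in>X-{v}. K' w)" using X(1) fX by (simp add: sum.remove)
      moreover have "card (X - {v}) \<le> (\<Sum>w\<in>X-{v}. K' w)" using X(2) by (intro sum_ge_card) auto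
      moreover have "card (X - {v}) = N - 2" using X fX by simp
      ultimately have "N \<le> (\<Sum>w\<in>X. K' w)" using v(2) N4 by linarith
      then show ?thesis using X(2,3) by (intro exI[of _ X]) simp
    next
      case False
      have one: "K' v = 1" if vT: "v \<in> T" for v
      proof -
        have "\<not> 2 \<le> K' v" using False vT by blast
        then show ?thesis using pos[OF vT] by simp
      qed
      have "(\<Sum>v\<in>T. K' v) = (\<Sum>v\<in>T. 1)" by (rule sum.cong[OF refl]) (rule one)
      then have "N + 3 \<le> card T" using tot by simp
      from PH[OF two N4 Tv fT this] obtain D where D: "D \<subseteq> T" "D \<noteq> {}" "card D \<le> N" "(\<Sum>v\<in>D. v) = 0"
        by blast
      have "\<exists>X. D \<subseteq> X \<and> X \<subseteq> T \<and> card X = N"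
        by (rule exists_subset_between[of D N T]) (use D \<open>N + 3 \<le> card T\<close> fT in auto)
      then obtain X where X: "D \<subseteq> X" "X \<subseteq> T" "card X = N" by blast
      have "V.dependent D" using dep_of_zero_sum[OF finite_subset[OF D(1) fT] D(2) D(4)] .
      then have "V.dependent X" by (rule V.dependent_mono[OF _ X(1)])
      then show ?thesis using X(2,3) by (intro exI[of _ X]) simp
    qed
  qed
  then obtain X where X: "X \<subseteq> T" and XX: "(card X \<le> N - 1 \<and> N \<le> (\<Sum>v\<in>X. K' v)) \<or> (card X = N \<and> V.dependent X)"
    by blast
  have fX: "finite X" using X fT finite_subset by blast
  obtain B where B: "B \<subseteq> X" "V.independent B" "X \<subseteq> V.span B"
    using V.maximal_independent_subset[of X] by blast
  have fB: "finite B" using B(1) fX finite_subset by blast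
  have cB: "card B \<le> N - 1"
  proof (cases "card X \<le> N - 1 \<and> N \<le> (\<Sum>v\<in>X. K' v)")
    case True then show ?thesis using card_mono[OF fX B(1)] by simp
  next
    case False
    then have "card X = N" "V.dependent X" using XX by auto
    then have "B \<noteq> X" using B(2) by blast
    then have "card B < card X" using psubset_card_mono[OF fX] B(1) by blast
    then show ?thesis using \<open>card X = N\<close> by simp
  qed
  have sX: "N \<le> (\<Sum>v\<in>X. K' v)" using XX sum_ge_card[OF X] by auto
  have "(\<Sum>v\<in>X. K' v) \<le> (\<Sum>v\<in>{v\<in>W N. v \<in> V.span B}. K' v)"
    using fW X TW B(3) by (intro sum_mono2) auto
  also have "\<dots> \<le> N - 1" unfolding K'_def
    using SUB[OF two _ fB _ B(2) cB hK] N4 B(1) X Tv by auto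
  finally show False using sX N4 by simp
qed

lemma lower:
  assumes two: "card (UNIV :: 'a::{field,finite} set) = 2" and N4: "4 \<le> N"
  shows "\<exists>K :: (nat \<Rightarrow> 'a) set \<Rightarrow> nat.
      (\<forall>S\<in>proj_subspaces N (N - 2). mult_of N K S \<le> N - 1) \<and>
      N + 2 = (\<Sum>P\<in>proj_points N. K P)"
proof -
  have N1: "1 \<le> N" using N4 by simp
  define K0 :: "(nat \<Rightarrow> 'a) set \<Rightarrow> nat" where
    "K0 P = (if P \<in> (\<lambda>v. {0, v}) ` FR N then 1 else 0)" for P
  have fW: "finite (W N :: (nat \<Rightarrow> 'a) set)" by (rule W_finite)
  have K0v: "K0 {0, v} = (if v \<in> FR N then (1::nat) else 0)" if v: "v \<in> W N" for v
    unfolding K0_def using inj_on_image_mem_iff[OF inj_pt v FR_W] by simp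
  have tot: "(\<Sum>P\<in>proj_points N. K0 P) = N + 2"
  proof -
    have "(\<Sum>P\<in>proj_points N. K0 P) = (\<Sum>v\<in>W N. K0 {0, v})" by (rule total_eq[OF two])
    also have "\<dots> = (\<Sum>v\<in>(W N :: (nat \<Rightarrow> 'a) set). if v \<in> FR N then (1::nat) else 0)"
      by (rule sum.cong[OF refl]) (rule K0v)
    also have "\<dots> = card {v\<in>(W N :: (nat \<Rightarrow> 'a) set). v \<in> FR N}" using fW by (simp add: sum.inter_filter[symmetric])
    also have "{v\<in>W N. v \<in> FR N} = (FR N :: (nat \<Rightarrow> 'a) set)" using FR_W by blast
    finally show ?thesis using card_FR[OF N1] by simp
  qed
  have mu: "mult_of N K0 S \<le> N - 1" if S: "S \<in> proj_subspaces N (N - 2)" for S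
  proof -
    obtain B where B: "S = lin_span B" "finite B" "B \<subseteq> vecs N" "lin_indep B" "card B = N - 2 + 1"
      using S unfolding proj_subspaces_def by blast
    have SB: "S = V.span B" using B lin_span_eq by blast
    have iB: "V.independent B" using B lin_indep_eq by blast
    have "mult_of N K0 S = (\<Sum>v\<in>{v\<in>W N. v \<in> S}. K0 {0, v})"
    proof -
      have z: "(0::nat\<Rightarrow>'a) \<in> S" using SB V.span_zero by blast
      show ?thesis by (rule mult_eq[OF two z])
    qed
    also have "\<dots> = (\<Sum>v\<in>{v\<in>W N. v \<in> S}. if v \<in> FR N then (1::nat) else 0)"
      by (rule sum.cong[OF refl]) (rule K0v, simp)
    also have "\<dots> = card {v\<in>{v\<in>W N. v \<in> S}. v \<in> FR N}" using fW by (simp add: sum.inter_filter[symmetric])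
    finally have m: "mult_of N K0 S = card {v\<in>{v\<in>W N. v \<in> S}. v \<in> FR N}" .
    let ?G0 = "{v\<in>{v\<in>W N. v \<in> S}. v \<in> FR N}"
    show ?thesis
    proof (rule ccontr)
      assume "\<not> ?thesis"
      then have "N \<le> card ?G0" using m by simp
      then obtain G where G: "G \<subseteq> ?G0" "card G = N" "finite G" by (rule obtain_subset_with_card_n)
      have "V.independent G"
      proof (rule FR_indep[OF N1])
        show "G \<subseteq> FR N" using G(1) by auto
        show "ff N \<notin> G \<or> card G \<le> N" using G(2) by simp
      qed
      moreover have "G \<subseteq> V.span B" using G SB by auto
      ultimately have "card G \<le> card B" using V.independent_span_bound[OF B(2)] by simp
      then show False using G(2) B(5) N4 by simp
    qed
  qed
  show ?thesis using tot mu by (intro exI[of _ K0]) auto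
qed

theorem mainTheorem13:
  fixes k :: nat
  assumes "k \<ge> 5" and "card (UNIV :: 'a set) = 2"
  shows "m_q TYPE('a::{field,finite}) (k - 3) (k - 1) (k - 2) = k + 1"
proof -
  define N where "N = k - 1"
  have N4: "4 \<le> N" using assms(1) unfolding N_def by simp
  have e: "k - 3 = N - 2" "k - 2 = N - 1" "k - 1 = N" "k + 1 = N + 2" using assms(1) unfolding N_def by auto
  show ?thesis unfolding e m_q_def
  proof (rule Greatest_equality)
    show "\<exists>K :: (nat \<Rightarrow> 'a) set \<Rightarrow> nat. (\<forall>S\<in>proj_subspaces N (N - 2). mult_of N K S \<le> N - 1) \<and>
      N + 2 = (\<Sum>P\<in>proj_points N. K P)" by (rule lower[OF assms(2) N4])
  next
    fix y assume "\<exists>K :: (nat \<Rightarrow> 'a) set \<Rightarrow> nat. (\<forall>S\<in>proj_subspaces N (N - 2). mult_of N K S \<le> N - 1) \<and>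
      y = (\<Sum>P\<in>proj_points N. K P)"
    then show "y \<le> N + 2" using upper[OF assms(2) N4] by blast
  qed
qed

end
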